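(* Fix integers $K\ge 1$, $R_1\ge 1$, $R_2\ge 1$. For $\alpha>0$ let $L_k^\alpha$, $W^\alpha_{k,r}$, $T^\alpha$ and $N^\alpha$ be as defined in the context (obtained from the coupled construction by restriction to $[0,\alpha]^{R_1}$). Then: (i) for every fixed $\alpha>0$, $N^\alpha<\infty$ almost surely; (ii) $N^\alpha\to\infty$ almost surely as $\alpha\to\infty$.
   Context: A Gamma process $\Gamma\mathrm{P}(\mu_0)$ with base measure $\mu_0$ on a space $\Theta$ is the completely random measure $G=\sum_j w_j\delta_{\theta_j}$ whose atoms $\{(w_j,\theta_j)\}$ form a Poisson point process on $(0,\infty)\times\Theta$ with intensity $w^{-1}e^{-w}\,dw\,\mu_0(d\theta)$; in particular $G(B)\sim\mathrm{Gamma}(\text{shape }\mu_0(B),\text{ rate }1)$ and $G$ is independent on disjoint sets. A Poisson random measure $\mathrm{PRM}(\mu)$ with (σ-finite) mean measure $\mu$ is a random integer-valued measure with $\mathrm{Poisson}(\mu(B))$ counts on each $B$, independent on disjoint sets. Coupled construction: let $\lambda$ be Lebesgue measure on $[0,\infty)^{R_1}$. For $k=1,\dots,K$ independently, let $L_k\sim\Gamma\mathrm{P}(\lambda)$, $L_k=\sum_j w_{kj}\delta_{\theta^k_j}$. Conditionally on $L_1,\dots,L_K$, for each $k$ and $r=1,\dots,R_2$ independently let $W_{k,r}\sim\Gamma\mathrm{P}(L_k)$ (so $W_{k,r}=\sum_j v_{krj}\delta_{\theta^k_j}$ shares the atoms of $L_k$). Conditionally on all $W_{k,r}$, let $T\sim\mathrm{PRM}\big(\sum_{r=1}^{R_2}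 W_{1,r}\times\cdots\times W_{K,r}\big)$ on $([0,\infty)^{R_1})^K$. For $\alpha>0$ let $L_k^\alpha, W^\alpha_{k,r}, T^\alpha$ be the restrictions of $L_k, W_{k,r}, T$ to $[0,\alpha]^{R_1}$ (respectively $([0,\alpha]^{R_1})^K$); then $L_k^\alpha\sim\Gamma\mathrm{P}(\lambda_\alpha)$ with $\lambda_\alpha$ Lebesgue measure restricted to $[0,\alpha]^{R_1}$, $W^\alpha_{k,r}\mid L^\alpha_k\sim\Gamma\mathrm{P}(L^\alpha_k)$, and $T^\alpha\sim\mathrm{PRM}(\sum_r W^\alpha_{1,r}\times\cdots\times W^\alpha_{K,r})$. Each point of $T^\alpha$ has the form $(\theta^1_{i_1},\dots,\theta^K_{i_K})$ and is identified with the tensor entry index $(i_1,\dots,i_K)$. $N^\alpha$ denotes the number of distinct points (distinct entry indices) in the support of $T^\alpha$. *)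

theory Defs
  imports "HOL-Probability.Probability"
begin

definition gamma_pdf :: "real \<Rightarrow> real \<Rightarrow> real" where
  "gamma_pdf a x = (if 0 < x then x powr (a - 1) * exp (- x) / Gamma a else 0)"

definition gamma_law :: "ennreal \<Rightarrow> ennreal measure" where
  "gamma_law s =
     (if s = 0 then return borel 0
      else if s = \<top> then return borel \<top>
      else distr (density lborel (\<lambda>x. ennreal (gamma_pdf (enn2real s) x))) borel ennreal)"

definition poisson_law :: "ennreal \<Rightarrow> ennreal measure" where
  "poisson_law m =
     (if m = 0 then return borel 0
      else if m = \<top> then return borel \<top>
      else distr (measure_pmf (poisson_pmf (enn2real m))) borel of_nat)"

definition rm_events :: "'w measure \<Rightarrow> ('w \<Rightarrow> 'a measure) set \<Rightarrow> 'w set set" where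
  "rm_events M Xs = sigma_sets (space M)
     {{\<omega> \<in> space M. emeasure (X \<omega>) B \<in> C} | X B C. X \<in> Xs \<and> C \<in> sets (borel :: ennreal measure)}"

text \<open>Conditionally on the events F, the random measures X i (on the measurable space S) are
  independent over i, each X i has independent increments on disjoint sets, and
  X i (B) has law D (\<mu> i \<omega> B). With D = gamma_law this says X i ~ Gamma process with base
  measure \<mu> i; with D = poisson_law it says X i ~ Poisson random measure with mean measure \<mu> i.\<close>
definition cond_indep_law ::
  "'w measure \<Rightarrow> 'w set set \<Rightarrow> 'a measure \<Rightarrow> ('i \<Rightarrow> 'w \<Rightarrow> 'a measure)
     \<Rightarrow> ('i \<Rightarrow> 'w \<Rightarrow> 'a set \<Rightarrow> ennreal) \<Rightarrow> (ennreal \<Rightarrow> ennreal measure) \<Rightarrow> bool" where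
  "cond_indep_law M F S X \<mu> D \<longleftrightarrow>
     (\<forall>i. \<forall>\<omega>\<in>space M. sets (X i \<omega>) = sets S) \<and>
     (\<forall>i. \<forall>B\<in>sets S. (\<lambda>\<omega>. emeasure (X i \<omega>) B) \<in> borel_measurable M) \<and>
     (\<forall>(n::nat) (j::nat \<Rightarrow> 'i) (B::nat \<Rightarrow> 'a set) (C::nat \<Rightarrow> ennreal set) E.
        E \<in> F \<and> (\<forall>m<n. B m \<in> sets S \<and> C m \<in> sets borel) \<and>
        (\<forall>m<n. \<forall>m'<n. m \<noteq> m' \<and> j m = j m' \<longrightarrow> B m \<inter> B m' = {}) \<longrightarrow>
        emeasure M (E \<inter> {\<omega> \<in> space M. \<forall>m<n. emeasure (X (j m) \<omega>) (B m) \<in> C m})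
          = (\<integral>\<^sup>+\<omega>. indicator E \<omega> * (\<Prod>m<n. emeasure (D (\<mu> (j m) \<omega> (B m))) (C m)) \<partial>M))"

text \<open>Lebesgue measure on [0,\<infinity>)^R1, R1 = CARD('d).\<close>
definition orthant_lebesgue :: "(real^'d::finite) measure" where
  "orthant_lebesgue = density lborel (indicator {x. \<forall>i. 0 \<le> x $ i})"

text \<open>Ground measurable space of T: K-tuples (K = CARD('k)) of points of R^R1.\<close>
definition tuple_space :: "('k::finite \<Rightarrow> real^'d::finite) measure" where
  "tuple_space = PiM UNIV (\<lambda>_. borel)"

definition T_mean :: "('k::finite \<Rightarrow> 'r::finite \<Rightarrow> (real^'d::finite) measure)
     \<Rightarrow> ('k \<Rightarrow> real^'d) set \<Rightarrow> ennreal" where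
  "T_mean W B = (\<Sum>r\<in>UNIV. emeasure (PiM UNIV (\<lambda>k. W k r)) B)"

definition coupled_construction ::
  "'w measure \<Rightarrow> ('k::finite \<Rightarrow> 'w \<Rightarrow> (real^'d::finite) measure)
     \<Rightarrow> ('k \<Rightarrow> 'r::finite \<Rightarrow> 'w \<Rightarrow> (real^'d) measure)
     \<Rightarrow> ('w \<Rightarrow> ('k \<Rightarrow> real^'d) measure) \<Rightarrow> bool" where
  "coupled_construction M L W T \<longleftrightarrow>
     prob_space M \<and>
     cond_indep_law M {space M} borel L (\<lambda>k \<omega> B. emeasure orthant_lebesgue B) gamma_law \<and>
     cond_indep_law M (rm_events M (range L)) borel (\<lambda>(k, r). W k r)
        (\<lambda>(k, r) \<omega> B. emeasure (L k \<omega>) B) gamma_law \<and>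
     cond_indep_law M (rm_events M (range L \<union> range (\<lambda>(k, r). W k r))) tuple_space
        (\<lambda>_::unit. T) (\<lambda>_ \<omega> B. T_mean (\<lambda>k r. W k r \<omega>) B) poisson_law"

text \<open>The box ([0,\<alpha>]^R1)^K and the set of distinct points of T^\<alpha> (atoms of T in the box).\<close>
definition box :: "real \<Rightarrow> ('k::finite \<Rightarrow> real^'d::finite) set" where
  "box \<alpha> = {x. \<forall>k i. 0 \<le> x k $ i \<and> x k $ i \<le> \<alpha>}"

definition points_T :: "real \<Rightarrow> ('k::finite \<Rightarrow> real^'d::finite) measure \<Rightarrow> ('k \<Rightarrow> real^'d) set" where
  "points_T \<alpha> \<nu> = {x \<in> box \<alpha>. emeasure \<nu> {x} > 0}"

end

theory Submission
  imports Defs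
begin

lemma cil_finite:
  assumes law: "cond_indep_law M F S X \<mu> D" and E: "E \<in> F" and I: "finite I"
    and B: "\<And>a. a\<in>I \<Longrightarrow> B a \<in> sets S" and C: "\<And>a. a\<in>I \<Longrightarrow> C a \<in> sets borel"
    and dj: "\<And>a b. a\<in>I \<Longrightarrow> b\<in>I \<Longrightarrow> a\<noteq>b \<Longrightarrow> j a = j b \<Longrightarrow> B a \<inter> B b = {}"
  shows "emeasure M (E \<inter> {\<omega>\<in>space M. \<forall>a\<in>I. emeasure (X (j a) \<omega>) (B a) \<in> C a})
     = (\<integral>\<^sup>+\<omega>. indicator E \<omega> * (\<Prod>a\<in>I. emeasure (D (\<mu> (j a) \<omega> (B a))) (C a)) \<partial>M)"
proof -
  obtain f where f: "bij_betw f {0..<card I} I" using ex_bij_betw_nat_finite[OF I] by blast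
  have fin: "\<And>m. m < card I \<Longrightarrow> f m \<in> I" using f by (auto simp: bij_betw_def)
  have inj: "\<And>m m'. m < card I \<Longrightarrow> m' < card I \<Longrightarrow> f m = f m' \<Longrightarrow> m = m'"
    using f by (auto simp: bij_betw_def inj_on_def)
  have key: "emeasure M (E \<inter> {\<omega> \<in> space M. \<forall>m<card I. emeasure (X ((j \<circ> f) m) \<omega>) ((B \<circ> f) m) \<in> (C \<circ> f) m})
          = (\<integral>\<^sup>+\<omega>. indicator E \<omega> * (\<Prod>m<card I. emeasure (D (\<mu> ((j\<circ>f) m) \<omega> ((B\<circ>f) m))) ((C\<circ>f) m)) \<partial>M)"
    using law E unfolding cond_indep_law_def
    apply (elim conjE)
    apply (drule spec[where x="card I"], drule spec[where x="j \<circ> f"], drule spec[where x="B \<circ> f"],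
           drule spec[where x="C \<circ> f"], drule spec[where x=E])
    apply (erule mp)
    apply (intro conjI allI impI)
      apply (rule E)
    subgoal for m using fin[of m] B C by simp
    subgoal for m using fin[of m] B C by simp
    subgoal for m m'
    proof -
      assume h: "m < card I" "m' < card I" "m \<noteq> m' \<and> (j \<circ> f) m = (j \<circ> f) m'"
      have "f m \<noteq> f m'" using inj[of m m'] h by blast
      then show ?thesis using dj[OF fin[of m] fin[of m']] h by simp
    qed
    done
  have s: "{\<omega> \<in> space M. \<forall>m<card I. emeasure (X ((j \<circ> f) m) \<omega>) ((B \<circ> f) m) \<in> (C \<circ> f) m}
      = {\<omega>\<in>space M. \<forall>a\<in>I. emeasure (X (j a) \<omega>) (B a) \<in> C a}"
  proof -
    have surj: "\<And>a. a \<in> I \<Longrightarrow> \<exists>m<card I. a = f m"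
      using f unfolding bij_betw_def by (metis atLeastLessThan_iff imageE)
    have "\<And>P. (\<forall>m<card I. P (f m)) \<longleftrightarrow> (\<forall>a\<in>I. P a)"
      using surj fin by blast
    from this[of "\<lambda>a. emeasure (X (j a) _) (B a) \<in> C a"] show ?thesis by simp
  qed
  have p: "\<And>\<omega>. (\<Prod>m<card I. emeasure (D (\<mu> ((j\<circ>f) m) \<omega> ((B\<circ>f) m))) ((C\<circ>f) m))
        = (\<Prod>a\<in>I. emeasure (D (\<mu> (j a) \<omega> (B a))) (C a))"
    using prod.reindex_bij_betw[OF f, of "\<lambda>a. emeasure (D (\<mu> (j a) _ (B a))) (C a)"]
    by (simp add: atLeast0LessThan)
  show ?thesis using key unfolding s p .
qed

lemma gamma_top: "emeasure (gamma_law s) {\<top>} = (if s = \<top> then 1 else 0)"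
proof -
  have "ennreal -` {\<top>} = ({}::real set)" by auto
  then show ?thesis unfolding gamma_law_def
    by (simp add: emeasure_distr)
qed

lemma poisson_zero: "emeasure (poisson_law m) {0} = (if m = \<top> then 0 else ennreal (exp (- enn2real m)))"
proof (cases "m = 0 \<or> m = \<top>")
  case True then show ?thesis unfolding poisson_law_def by (elim disjE) simp_all
next
  case False
  then have pos: "0 < enn2real m"
    by (simp add: enn2real_positive_iff less_top order_le_neq_trans[OF zero_le])
  have pre: "of_nat -` {0::ennreal} = {0::nat}" by auto
  have "emeasure (distr (measure_pmf (poisson_pmf (enn2real m))) borel of_nat) {0::ennreal}
      = emeasure (measure_pmf (poisson_pmf (enn2real m))) {0}"
    by (subst emeasure_distr) (simp_all add: pre)
  also have "\<dots> = ennreal (exp (- enn2real m))"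
    using pos by (simp add: emeasure_pmf_single)
  finally show ?thesis using False unfolding poisson_law_def by simp
qed

lemma poisson_nonnat: "emeasure (poisson_law m) (- (range of_nat \<union> {\<top>})) = 0"
proof -
  have pre: "of_nat -` (- insert \<top> (range of_nat)) = ({}::nat set)" by auto
  have cnt: "countable (range of_nat \<union> {\<top>::ennreal})" by simp
  have meas: "- (range of_nat \<union> {\<top>::ennreal}) \<in> sets borel"
  proof -
    have "range of_nat \<union> {\<top>::ennreal} \<in> sets borel"
      by (rule sets.countable[OF _ cnt]) simp
    then have "space borel - (range of_nat \<union> {\<top>::ennreal}) \<in> sets borel" by blast
    then show ?thesis by (simp add: Compl_eq_Diff_UNIV)
  qed
  show ?thesis unfolding poisson_law_def
    using meas by (simp add: emeasure_distr pre)
qed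

lemma poisson_top: "emeasure (poisson_law m) {\<top>} = (if m = \<top> then 1 else 0)"
proof -
  have "of_nat -` {\<top>::ennreal} = ({}::nat set)" by auto
  then show ?thesis unfolding poisson_law_def
    by (simp add: emeasure_distr)
qed

lemma cil_sets: "cond_indep_law M F S X \<mu> D \<Longrightarrow> \<omega> \<in> space M \<Longrightarrow> sets (X i \<omega>) = sets S"
  unfolding cond_indep_law_def by blast

lemma cil_meas: "cond_indep_law M F S X \<mu> D \<Longrightarrow> B \<in> sets S \<Longrightarrow> (\<lambda>\<omega>. emeasure (X i \<omega>) B) \<in> borel_measurable M"
  unfolding cond_indep_law_def by blast

lemma cil_AE_single:
  assumes law: "cond_indep_law M F S X \<mu> D" and sp: "space M \<in> F" and B: "B \<in> sets S"
    and C: "C \<in> sets borel" and ae: "AE \<omega> in M. emeasure (D (\<mu> i \<omega> B)) C = 0"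
  shows "AE \<omega> in M. emeasure (X i \<omega>) B \<notin> C"
proof -
  have "emeasure M (space M \<inter> {\<omega>\<in>space M. \<forall>a\<in>{()}. emeasure (X ((\<lambda>_. i) a) \<omega>) ((\<lambda>_. B) a) \<in> (\<lambda>_. C) a})
     = (\<integral>\<^sup>+\<omega>. indicator (space M) \<omega> * (\<Prod>a\<in>{()}. emeasure (D (\<mu> ((\<lambda>_. i) a) \<omega> ((\<lambda>_. B) a))) ((\<lambda>_. C) a)) \<partial>M)"
    by (rule cil_finite[OF law sp]) (use B C in auto)
  also have "\<dots> = (\<integral>\<^sup>+\<omega>. 0 \<partial>M)"
    by (rule nn_integral_cong_AE) (use ae in auto)
  finally have z: "emeasure M {\<omega>\<in>space M. emeasure (X i \<omega>) B \<in> C} = 0"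
    by (simp add: Int_absorb1 cong: rev_conj_cong)
  have m: "{\<omega>\<in>space M. emeasure (X i \<omega>) B \<in> C} \<in> sets M"
    using measurable_sets[OF cil_meas[OF law B] C] by (simp add: Int_def conj_commute vimage_def)
  show ?thesis
    by (subst AE_iff_measurable[OF m]) (auto simp: z)
qed

definition cst :: "real \<Rightarrow> real^'d::finite" where "cst c = (\<chi> i. c)"
definition cube :: "nat \<Rightarrow> (real^'d::finite) set" where
  "cube m = cbox (cst (2*real m)) (cst (2*real m + 1))"
definition bigc :: "nat \<Rightarrow> (real^'d::finite) set" where
  "bigc n = cbox (cst (- real n)) (cst (real n))"

lemma mem_cbox_cst: "x \<in> cbox (cst a) (cst b) \<longleftrightarrow> (\<forall>i. a \<le> x$i \<and> x$i \<le> b)"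
  by (simp add: mem_box_cart cst_def)

lemma bigc_UN: "(\<Union>n. bigc n) = (UNIV :: (real^'d::finite) set)"
proof -
  have "x \<in> (\<Union>n. bigc n)" for x :: "real^'d"
  proof
    have "\<forall>i. - real (nat \<lceil>norm x\<rceil>) \<le> x$i \<and> x$i \<le> real (nat \<lceil>norm x\<rceil>)"
    proof
      fix i have "\<bar>x$i\<bar> \<le> norm x" by (rule component_le_norm_cart)
      moreover have "norm x \<le> real (nat \<lceil>norm x\<rceil>)" by linarith
      ultimately show "- real (nat \<lceil>norm x\<rceil>) \<le> x$i \<and> x$i \<le> real (nat \<lceil>norm x\<rceil>)" by linarith
    qed
    then show "x \<in> bigc (nat \<lceil>norm x\<rceil>)" by (simp add: bigc_def mem_cbox_cst)
  qed simp
  then show ?thesis by blast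
qed

lemma olb_le: fixes A :: "(real^'d::finite) set" assumes "A \<in> sets borel" shows "emeasure orthant_lebesgue A \<le> emeasure lborel A"
proof -
  have om: "{x::real^'d. \<forall>i. 0 \<le> x $ i} \<in> sets borel" by measurable
  have "emeasure orthant_lebesgue A = (\<integral>\<^sup>+x. indicator {x::real^'d. \<forall>i. 0 \<le> x $ i} x * indicator A x \<partial>lborel)"
    unfolding orthant_lebesgue_def using assms om by (subst emeasure_density) auto
  also have "\<dots> \<le> (\<integral>\<^sup>+x. indicator A x \<partial>lborel)"
    by (rule nn_integral_mono) (auto split: split_indicator)
  finally show ?thesis using assms by simp
qed

lemma olb_cbox_fin: "emeasure orthant_lebesgue (cbox a (b::real^'d::finite)) \<noteq> \<top>"
  using olb_le[of "cbox a b"] emeasure_lborel_cbox_finite[of a b]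
  by (simp add: top_unique)  

lemma olb_cube: "emeasure orthant_lebesgue (cube m :: (real^'d::finite) set) = 1"
proof -
  have om: "{x::real^'d. \<forall>i. 0 \<le> x $ i} \<in> sets borel" by measurable
  have sub: "cube m \<subseteq> {x::real^'d. \<forall>i. 0 \<le> x $ i}"
    by (auto simp: cube_def mem_cbox_cst) (metis of_nat_0_le_iff mult_nonneg_nonneg zero_le_numeral order.trans)
  have "emeasure orthant_lebesgue (cube m :: (real^'d::finite) set) = (\<integral>\<^sup>+x. indicator {x::real^'d. \<forall>i. 0 \<le> x $ i} x * indicator (cube m) x \<partial>lborel)"
    unfolding orthant_lebesgue_def using om by (subst emeasure_density) (auto simp: cube_def)
  also have "\<dots> = (\<integral>\<^sup>+x. indicator (cube m :: (real^'d) set) x \<partial>lborel)"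
  proof -
    have "\<And>x. indicator {x::real^'d. \<forall>i. 0 \<le> x $ i} x * indicator (cube m) x = (indicator (cube m) x :: ennreal)"
      using sub by (auto split: split_indicator)
    then show ?thesis by presburger
  qed
  also have "\<dots> = emeasure lborel (cube m :: (real^'d::finite) set)" by (simp add: cube_def)
  also have "\<dots> = 1"
  proof -
    have "\<And>b. b \<in> (Basis :: (real^'d) set) \<Longrightarrow> (cst (2 * real m + 1) - cst (2 * real m)) \<bullet> b = (1::real)"
      by (auto simp: Basis_vec_def cst_def inner_vec_def axis_def sum.delta)
    moreover have "\<forall>b\<in>(Basis :: (real^'d) set). cst (2 * real m) \<bullet> b \<le> cst (2 * real m + 1) \<bullet> b"
      by (auto simp: Basis_vec_def cst_def inner_vec_def axis_def if_distrib cong: if_cong)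
    ultimately show ?thesis unfolding cube_def emeasure_lborel_cbox_eq by simp
  qed
  finally show ?thesis .
qed

locale ccx =
  fixes M :: "'w measure"
    and L :: "'k::finite \<Rightarrow> 'w \<Rightarrow> (real^'d::finite) measure"
    and W :: "'k \<Rightarrow> 'r::finite \<Rightarrow> 'w \<Rightarrow> (real^'d) measure"
    and T :: "'w \<Rightarrow> ('k \<Rightarrow> real^'d) measure"
  assumes cc: "coupled_construction M L W T"
begin

lemma probM: "prob_space M" using cc unfolding coupled_construction_def by blast

sublocale P: prob_space M by (rule probM)

lemma lawL: "cond_indep_law M {space M} borel L (\<lambda>k \<omega> B. emeasure orthant_lebesgue B) gamma_law"
  using cc unfolding coupled_construction_def by blast
lemma lawW: "cond_indep_law M (rm_events M (range L)) borel (\<lambda>(k, r). W k r)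
        (\<lambda>(k, r) \<omega> B. emeasure (L k \<omega>) B) gamma_law"
  using cc unfolding coupled_construction_def by blast
lemma lawT: "cond_indep_law M (rm_events M (range L \<union> range (\<lambda>(k, r). W k r))) tuple_space
        (\<lambda>_::unit. T) (\<lambda>_ \<omega> B. T_mean (\<lambda>k r. W k r \<omega>) B) poisson_law"
  using cc unfolding coupled_construction_def by blast

lemma spW: "space M \<in> rm_events M (range L)" unfolding rm_events_def by (rule sigma_sets_top)
lemma spT: "space M \<in> rm_events M (range L \<union> range (\<lambda>(k, r). W k r))" unfolding rm_events_def by (rule sigma_sets_top)

lemma L_sets: "\<omega> \<in> space M \<Longrightarrow> sets (L k \<omega>) = sets borel"
  using cil_sets[OF lawL] by blast
lemma W_sets: "\<omega> \<in> space M \<Longrightarrow> sets (W k r \<omega>) = sets borel"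
  using cil_sets[OF lawW, of \<omega> "(k,r)"] by simp
lemma T_sets: "\<omega> \<in> space M \<Longrightarrow> sets (T \<omega>) = sets tuple_space"
  using cil_sets[OF lawT] by blast
lemma L_meas[measurable]: "B \<in> sets borel \<Longrightarrow> (\<lambda>\<omega>. emeasure (L k \<omega>) B) \<in> borel_measurable M"
  using cil_meas[OF lawL] by blast
lemma W_meas[measurable]: "B \<in> sets borel \<Longrightarrow> (\<lambda>\<omega>. emeasure (W k r \<omega>) B) \<in> borel_measurable M"
  using cil_meas[OF lawW, of B "(k,r)"] by simp
lemma T_meas[measurable]: "B \<in> sets tuple_space \<Longrightarrow> (\<lambda>\<omega>. emeasure (T \<omega>) B) \<in> borel_measurable M"
  using cil_meas[OF lawT] by blast

lemma L_fin: "B \<in> sets borel \<Longrightarrow> emeasure orthant_lebesgue B \<noteq> \<top> \<Longrightarrow> AE \<omega> in M. emeasure (L k \<omega>) B \<noteq> \<top>"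
  using cil_AE_single[OF lawL, where B=B and C="{\<top>}" and i=k] by (simp add: gamma_top)

lemma W_fin: "B \<in> sets borel \<Longrightarrow> (AE \<omega> in M. emeasure (L k \<omega>) B \<noteq> \<top>) \<Longrightarrow> AE \<omega> in M. emeasure (W k r \<omega>) B \<noteq> \<top>"
  using cil_AE_single[OF lawW spW, where B=B and C="{\<top>}" and i="(k,r)"] by (simp add: gamma_top)

lemma W_fin_cbox: "AE \<omega> in M. emeasure (W k r \<omega>) (cbox a b) \<noteq> \<top>"
  by (rule W_fin) (auto intro!: L_fin olb_cbox_fin)

lemma W_sf: "AE \<omega> in M. \<forall>k r. sigma_finite_measure (W k r \<omega>)"
proof -
  have "AE \<omega> in M. \<forall>k r n. emeasure (W k r \<omega>) (bigc n) \<noteq> \<top>"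
    unfolding bigc_def by (simp add: W_fin_cbox AE_all_countable)
  then show ?thesis
  proof (rule AE_mp, intro AE_I2 impI allI)
    fix \<omega> k r assume \<omega>: "\<omega> \<in> space M" and fin: "\<forall>k r n. emeasure (W k r \<omega>) (bigc n) \<noteq> \<top>"
    show "sigma_finite_measure (W k r \<omega>)"
    proof
      show "\<exists>A. countable A \<and> A \<subseteq> sets (W k r \<omega>) \<and> \<Union> A = space (W k r \<omega>) \<and> (\<forall>a\<in>A. emeasure (W k r \<omega>) a \<noteq> \<infinity>)"
        using fin W_sets[OF \<omega>, of k r] sets_eq_imp_space_eq[OF W_sets[OF \<omega>, of k r]] bigc_UN
        by (intro exI[of _ "range bigc"]) (auto simp: bigc_def)
    qed
  qed
qed

lemma T_mean_prod:
  assumes \<omega>: "\<omega> \<in> space M" and sf: "\<forall>k r. sigma_finite_measure (W k r \<omega>)"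
    and A: "\<And>k. A k \<in> sets borel"
  shows "T_mean (\<lambda>k r. W k r \<omega>) (Pi\<^sub>E UNIV A) = (\<Sum>r\<in>UNIV. \<Prod>k\<in>UNIV. emeasure (W k r \<omega>) (A k))"
  unfolding T_mean_def
proof (rule sum.cong[OF refl])
  fix r
  interpret product_sigma_finite "\<lambda>k. W k r \<omega>" using sf by (simp add: product_sigma_finite_def)
  show "emeasure (Pi\<^sub>M UNIV (\<lambda>k. W k r \<omega>)) (Pi\<^sub>E UNIV A) = (\<Prod>k\<in>UNIV. emeasure (W k r \<omega>) (A k))"
    by (rule emeasure_PiM) (auto simp: W_sets[OF \<omega>] A)
qed

lemma T_fin: "B \<in> sets tuple_space \<Longrightarrow> (AE \<omega> in M. T_mean (\<lambda>k r. W k r \<omega>) B \<noteq> \<top>) \<Longrightarrow> AE \<omega> in M. emeasure (T \<omega>) B \<noteq> \<top>"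
  using cil_AE_single[OF lawT spT, where B=B and C="{\<top>}"] by (simp add: poisson_top)

lemma T_nat: "B \<in> sets tuple_space \<Longrightarrow> AE \<omega> in M. emeasure (T \<omega>) B \<in> range of_nat \<union> {\<top>}"
proof -
  assume B: "B \<in> sets tuple_space"
  have meas: "- (range of_nat \<union> {\<top>::ennreal}) \<in> sets borel"
  proof -
    have cnt: "countable (range of_nat \<union> {\<top>::ennreal})" by simp
    have "range of_nat \<union> {\<top>::ennreal} \<in> sets borel"
      by (rule sets.countable[OF _ cnt]) simp
    then have "space borel - (range of_nat \<union> {\<top>::ennreal}) \<in> sets borel" by blast
    then show ?thesis by (simp add: Compl_eq_Diff_UNIV)
  qed
  show ?thesis
  proof -
    have "AE \<omega> in M. emeasure (T \<omega>) B \<notin> - (range of_nat \<union> {\<top>})"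
      by (rule cil_AE_single[OF lawT spT B meas]) (rule AE_I2, rule poisson_nonnat)
    then show ?thesis by (rule AE_mp) (rule AE_I2, blast)
  qed
qed

end

definition flx :: "nat \<Rightarrow> ('k::finite \<Rightarrow> real^'d::finite) \<Rightarrow> 'k \<Rightarrow> 'd \<Rightarrow> int" where
  "flx j x = (\<lambda>k i. \<lfloor>2^j * x k $ i\<rfloor>)"

definition Q :: "nat \<Rightarrow> ('k::finite \<Rightarrow> 'd::finite \<Rightarrow> int) \<Rightarrow> ('k \<Rightarrow> real^'d) set" where
  "Q j z = {x. flx j x = z}"

lemma floor_pow2: "j' \<le> j \<Longrightarrow> \<lfloor>2^j' * (a::real)\<rfloor> = \<lfloor>2^j * a\<rfloor> div 2^(j-j')"
proof -
  assume "j' \<le> j"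
  then have "(2::real)^j = 2^j' * 2^(j-j')" by (simp add: power_add[symmetric])
  then have "2^j' * a = (2^j * a) / real_of_int (2^(j-j'))" by simp
  then show ?thesis using floor_divide_real_eq_div[of "2^(j-j')" "2^j * a"] by simp
qed

lemma flx_nest: "j' \<le> j \<Longrightarrow> flx j x = flx j y \<Longrightarrow> flx j' x = flx j' y"
  unfolding flx_def fun_eq_iff by (metis floor_pow2)

lemma flx_unique: assumes "\<And>j. flx j x = flx j y" shows "x = y"
proof (rule ext, rule vec_eq_iff[THEN iffD2], rule allI)
  fix k i
  let ?a = "x k $ i" and ?b = "y k $ i"
  have eq: "\<And>j. \<lfloor>2^j * ?a\<rfloor> = \<lfloor>2^j * ?b\<rfloor>" using assms unfolding flx_def fun_eq_iff by blast
  have small: "\<And>j::nat. \<bar>?a - ?b\<bar> * 2^j < 1"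
  proof -
    fix j :: nat
    have "\<bar>2^j * ?a - 2^j * ?b\<bar> < 1" using eq[of j] by linarith
    moreover have "\<bar>2^j * ?a - 2^j * ?b\<bar> = \<bar>?a - ?b\<bar> * 2^j"
      by (metis abs_mult abs_of_nonneg mult.commute right_diff_distrib zero_le_numeral zero_le_power)
    ultimately show "\<bar>?a - ?b\<bar> * 2^j < 1" by simp
  qed
  show "?a = ?b"
  proof (rule ccontr)
    assume "?a \<noteq> ?b"
    then have pos: "0 < \<bar>?a - ?b\<bar>" by simp
    obtain j :: nat where "1 / \<bar>?a - ?b\<bar> < 2^j" using real_arch_pow[of 2 "1 / \<bar>?a - ?b\<bar>"] by auto
    then have "1 < \<bar>?a - ?b\<bar> * 2^j" using pos by (simp add: field_simps)
    with small[of j] show False by simp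
  qed
qed

lemma inner_sets: "{v::real^'d::finite. \<forall>i. \<lfloor>2^j * v $ i\<rfloor> = c i} \<in> sets borel"
  by measurable

lemma Q_PiE: "Q j z = Pi\<^sub>E UNIV (\<lambda>k. {v::real^'d::finite. \<forall>i. \<lfloor>2^j * v $ i\<rfloor> = z k i})"
  by (auto simp: Q_def flx_def PiE_UNIV_domain fun_eq_iff)

lemma Q_sets: "Q j z \<in> sets (tuple_space :: (('k::finite \<Rightarrow> real^'d::finite) measure))"
  unfolding Q_PiE tuple_space_def by (rule sets_PiM_I_finite) (auto intro: inner_sets)

lemma box_PiE: "box \<alpha> = Pi\<^sub>E UNIV (\<lambda>k. {v::real^'d::finite. \<forall>i. 0 \<le> v $ i \<and> v $ i \<le> \<alpha>})"
  by (auto simp: box_def PiE_UNIV_domain)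

lemma box_sets: "box \<alpha> \<in> sets (tuple_space :: (('k::finite \<Rightarrow> real^'d::finite) measure))"
  unfolding box_PiE tuple_space_def by (rule sets_PiM_I_finite) auto

lemma single_sets: "{x} \<in> sets (tuple_space :: (('k::finite \<Rightarrow> real^'d::finite) measure))"
proof -
  have "{x} = Pi\<^sub>E UNIV (\<lambda>k. {x k})" by (auto simp: PiE_UNIV_domain)
  then show ?thesis unfolding tuple_space_def by (simp add: sets_PiM_I_finite)
qed

lemma PiE_sets: "(\<And>k. A k \<in> sets borel) \<Longrightarrow> Pi\<^sub>E UNIV A \<in> sets (tuple_space :: (('k::finite \<Rightarrow> real^'d::finite) measure))"
  unfolding tuple_space_def by (rule sets_PiM_I_finite) auto

definition intg :: "('k::finite \<Rightarrow> real^'d::finite) measure \<Rightarrow> ('k \<Rightarrow> real^'d) set \<Rightarrow> bool" where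
  "intg \<nu> A \<longleftrightarrow> (\<forall>j z. emeasure \<nu> (A \<inter> Q j z) \<in> range of_nat)"

lemma nat_ne0_ge1: "(e::ennreal) \<in> range of_nat \<Longrightarrow> e \<noteq> 0 \<Longrightarrow> 1 \<le> e"
proof -
  assume "e \<in> range of_nat" "e \<noteq> 0"
  then obtain n where n: "e = of_nat n" "n \<noteq> 0" by auto
  have "of_nat 1 \<le> (of_nat n::ennreal)" by (rule of_nat_mono) (use n in simp)
  then show ?thesis using n by simp
qed

lemma flx_Suc: "flx (Suc j) x = flx (Suc j) y \<Longrightarrow> flx j x = flx j y"
  by (rule flx_nest) auto

lemma atom_ge1:
  fixes \<nu> :: "('k::finite \<Rightarrow> real^'d::finite) measure"
  assumes S: "sets \<nu> = sets tuple_space" and A: "A \<in> sets tuple_space" and fin: "emeasure \<nu> A \<noteq> \<top>"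
    and I: "intg \<nu> A" and x: "x \<in> A" and nz: "emeasure \<nu> {x} \<noteq> 0"
  shows "1 \<le> emeasure \<nu> {x}"
proof -
  define S where "S j = A \<inter> Q j (flx j x)" for j
  have Ss: "S j \<in> sets \<nu>" for j unfolding S_def using A Q_sets S by auto
  have dec: "decseq S"
    unfolding decseq_Suc_iff S_def Q_def using flx_Suc by auto
  have int: "(\<Inter>j. S j) = {x}"
  proof
    show "{x} \<subseteq> (\<Inter>j. S j)" using x by (auto simp: S_def Q_def)
    show "(\<Inter>j. S j) \<subseteq> {x}" using flx_unique by (auto simp: S_def Q_def)
  qed
  have "(INF j. emeasure \<nu> (S j)) = emeasure \<nu> (\<Inter>j. S j)"
  proof (rule INF_emeasure_decseq'[OF Ss dec])
    have "emeasure \<nu> (S 0) \<le> emeasure \<nu> A" using A S by (intro emeasure_mono) (auto simp: S_def)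
    then have "emeasure \<nu> (S 0) \<noteq> \<infinity>" using fin by (auto simp: top_unique)
    then show "\<exists>i. emeasure \<nu> (S i) \<noteq> \<infinity>" by blast
  qed
  moreover have "1 \<le> emeasure \<nu> (S j)" for j
  proof (rule nat_ne0_ge1)
    show "emeasure \<nu> (S j) \<in> range of_nat" using I unfolding intg_def S_def by blast
    have "emeasure \<nu> {x} \<le> emeasure \<nu> (S j)" using int Ss by (intro emeasure_mono) auto
    then show "emeasure \<nu> (S j) \<noteq> 0" using nz by auto
  qed
  ultimately show ?thesis using int by (metis INF_greatest)
qed

lemma fin_points:
  fixes \<nu> :: "('k::finite \<Rightarrow> real^'d::finite) measure"
  assumes S: "sets \<nu> = sets tuple_space" and fin: "emeasure \<nu> (box \<alpha>) \<noteq> \<top>"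
    and I: "intg \<nu> (box \<alpha>)"
  shows "finite (points_T \<alpha> \<nu>)"
proof (rule ccontr)
  assume inf: "infinite (points_T \<alpha> \<nu>)"
  obtain n :: nat where n: "emeasure \<nu> (box \<alpha>) < of_nat n"
    using fin by (metis ennreal_less_top less_top ennreal_Ex_less_of_nat)
  obtain F where F: "finite F" "card F = n" "F \<subseteq> points_T \<alpha> \<nu>"
    using infinite_arbitrarily_large[OF inf] by blast
  have Fs: "\<And>x. x \<in> F \<Longrightarrow> {x} \<in> sets \<nu>" using S single_sets by auto
  have ge: "\<And>x. x \<in> F \<Longrightarrow> 1 \<le> emeasure \<nu> {x}"
    using F(3) by (intro atom_ge1[OF S box_sets fin I]) (auto simp: points_T_def)
  have "of_nat n = (\<Sum>x\<in>F. (1::ennreal))" using F by simp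
  also have "\<dots> \<le> (\<Sum>x\<in>F. emeasure \<nu> {x})" by (rule sum_mono) (rule ge)
  also have "\<dots> = emeasure \<nu> F" using emeasure_eq_sum_singleton[OF F(1) Fs] by simp
  also have "\<dots> \<le> emeasure \<nu> (box \<alpha>)"
    using F(3) S box_sets by (intro emeasure_mono) (auto simp: points_T_def)
  finally show False using n by simp
qed

lemma split_Q:
  fixes \<nu> :: "('k::finite \<Rightarrow> real^'d::finite) measure"
  assumes S: "sets \<nu> = sets tuple_space" and Y: "Y \<in> sets \<nu>" and nz: "emeasure \<nu> Y \<noteq> 0"
  shows "\<exists>z. emeasure \<nu> (Y \<inter> Q j z) \<noteq> 0"
proof (rule ccontr)
  assume "\<not> ?thesis"
  then have z: "\<And>z. emeasure \<nu> (Y \<inter> Q j z) = 0" by blast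
  have eq: "Y = (\<Union>n. Y \<inter> Q j (from_nat n))"
  proof safe
    fix x assume "x \<in> Y"
    then have "x \<in> Y \<inter> Q j (from_nat (to_nat (flx j x)))" by (simp add: Q_def)
    then show "x \<in> (\<Union>n. Y \<inter> Q j (from_nat n))" by blast
  qed
  have "emeasure \<nu> (\<Union>n. Y \<inter> Q j (from_nat n)) = 0"
  proof (rule emeasure_UN_eq_0)
    show "range (\<lambda>n. Y \<inter> Q j (from_nat n)) \<subseteq> sets \<nu>"
      using Y S Q_sets by (auto intro!: sets.Int)
  qed (use z in auto)
  with eq nz show False by simp
qed

lemma atom_exists:
  fixes \<nu> :: "('k::finite \<Rightarrow> real^'d::finite) measure"
  assumes S: "sets \<nu> = sets tuple_space" and A: "A \<in> sets tuple_space" and fin: "emeasure \<nu> A \<noteq> \<top>"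
    and I: "intg \<nu> A" and nz: "emeasure \<nu> A \<noteq> 0"
  shows "\<exists>x\<in>A. 0 < emeasure \<nu> {x}"
proof -
  have As: "A \<in> sets \<nu>" using A S by simp
  define z0 where "z0 = (SOME z. emeasure \<nu> (A \<inter> Q 0 z) \<noteq> 0)"
  define zs where "zs = rec_nat z0 (\<lambda>j z. SOME z'. emeasure \<nu> (A \<inter> Q j z \<inter> Q (Suc j) z') \<noteq> 0)"
  have zs0: "zs 0 = z0" and zsS: "zs (Suc j) = (SOME z'. emeasure \<nu> (A \<inter> Q j (zs j) \<inter> Q (Suc j) z') \<noteq> 0)" for j
    by (simp_all add: zs_def)
  define S where "S j = A \<inter> Q j (zs j)" for j
  have Ss: "S j \<in> sets \<nu>" for j unfolding S_def using As Q_sets S by auto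
  have step: "emeasure \<nu> (S j \<inter> Q (Suc j) (zs (Suc j))) \<noteq> 0" if "emeasure \<nu> (S j) \<noteq> 0" for j
    unfolding zsS S_def using split_Q[OF S Ss that, of "Suc j"] unfolding S_def by (rule someI_ex)
  have nzS: "emeasure \<nu> (S j) \<noteq> 0" for j
  proof (induction j)
    case 0 then show ?case unfolding S_def zs0 z0_def using split_Q[OF S As nz, of 0] by (rule someI_ex)
  next
    case (Suc j)
    have "emeasure \<nu> (S j \<inter> Q (Suc j) (zs (Suc j))) \<le> emeasure \<nu> (S (Suc j))"
      using Ss by (intro emeasure_mono) (auto simp: S_def)
    then show ?case using step[OF Suc] by auto
  qed
  have dec: "decseq S" unfolding decseq_Suc_iff
  proof
    fix j
    have "S j \<inter> Q (Suc j) (zs (Suc j)) \<noteq> {}" using step[OF nzS[of j]] by auto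
    then obtain y where y: "y \<in> S j" "y \<in> Q (Suc j) (zs (Suc j))" by blast
    show "S (Suc j) \<subseteq> S j"
    proof
      fix x assume "x \<in> S (Suc j)"
      then have "x \<in> A" "flx (Suc j) x = flx (Suc j) y" using y by (auto simp: S_def Q_def)
      moreover have "flx j y = zs j" "flx (Suc j) y = zs (Suc j)" using y by (auto simp: S_def Q_def)
      ultimately show "x \<in> S j" using flx_Suc[of j x y] by (auto simp: S_def Q_def)
    qed
  qed
  have ge1: "1 \<le> emeasure \<nu> (S j)" for j
    using nat_ne0_ge1 nzS I unfolding intg_def S_def by blast
  have "(INF j. emeasure \<nu> (S j)) = emeasure \<nu> (\<Inter>j. S j)"
  proof (rule INF_emeasure_decseq'[OF Ss dec])
    have "emeasure \<nu> (S 0) \<le> emeasure \<nu> A" using As by (intro emeasure_mono) (auto simp: S_def)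
    then have "emeasure \<nu> (S 0) \<noteq> \<infinity>" using fin by (auto simp: top_unique)
    then show "\<exists>i. emeasure \<nu> (S i) \<noteq> \<infinity>" by blast
  qed
  then have big: "1 \<le> emeasure \<nu> (\<Inter>j. S j)" using ge1 by (metis INF_greatest)
  then have "(\<Inter>j. S j) \<noteq> {}" by auto
  then obtain x where x: "x \<in> (\<Inter>j. S j)" by blast
  have "(\<Inter>j. S j) = {x}"
  proof
    show "(\<Inter>j. S j) \<subseteq> {x}"
    proof
      fix y assume "y \<in> (\<Inter>j. S j)"
      then have "\<And>j. flx j y = flx j x" using x by (auto simp: S_def Q_def)
      then show "y \<in> {x}" using flx_unique by auto
    qed
  qed (use x in auto)
  then have "0 < emeasure \<nu> {x}" using big by (metis order.strict_trans2 zero_less_one)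
  moreover have "x \<in> A" using x by (auto simp: S_def)
  ultimately show ?thesis by blast
qed

lemma Gamma_meas[measurable]: "(Gamma :: real \<Rightarrow> real) \<in> borel_measurable borel"
proof -
  have c: "- (\<int>\<^sub>\<le>\<^sub>0 :: real set) \<in> sets borel"
    by (rule borel_open) (simp add: open_Compl)
  have "(\<lambda>x::real. if x \<in> - \<int>\<^sub>\<le>\<^sub>0 then Gamma x else 0) \<in> borel_measurable borel"
    by (rule borel_measurable_continuous_on_if[OF c]) (auto intro!: continuous_on_Gamma continuous_intros)
  moreover have "(\<lambda>x::real. if x \<in> - \<int>\<^sub>\<le>\<^sub>0 then Gamma x else 0) = Gamma"
    by (auto simp: fun_eq_iff Gamma_nonpos_Int)
  ultimately show ?thesis by simp
qed

lemma gamma_pdf_meas[measurable]: "(\<lambda>(a, x). gamma_pdf a x) \<in> borel_measurable (borel \<Otimes>\<^sub>M borel)"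
  unfolding gamma_pdf_def by measurable

definition hfun :: "real \<Rightarrow> ennreal" where
  "hfun a = (\<integral>\<^sup>+x. ennreal (gamma_pdf a x) * indicator {1<..} x \<partial>lborel)"

lemma hfun_meas[measurable]: "hfun \<in> borel_measurable borel"
proof -
  have "(\<lambda>(a, x). ennreal (gamma_pdf a x) * indicator {1<..} x) \<in> borel_measurable (borel \<Otimes>\<^sub>M lborel)"
    by measurable
  then have "(\<lambda>a. \<integral>\<^sup>+x. ennreal (gamma_pdf a x) * indicator {1<..} x \<partial>lborel) \<in> borel_measurable borel"
    by (rule lborel.borel_measurable_nn_integral[of "\<lambda>a x. ennreal (gamma_pdf a x) * indicator {1<..} x", simplified])
  then show ?thesis unfolding hfun_def[abs_def] .
qed

definition gtail :: "ennreal \<Rightarrow> ennreal" where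
  "gtail s = emeasure (gamma_law s) {1<..}"

lemma gtail_eq: "gtail s = (if s = 0 then 0 else if s = \<top> then 1 else hfun (enn2real s))"
proof -
  have pre: "ennreal -` {1<..} = {1<..}" by auto
  have "s \<noteq> 0 \<Longrightarrow> s \<noteq> \<top> \<Longrightarrow> emeasure (distr (density lborel (\<lambda>x. ennreal (gamma_pdf (enn2real s) x))) borel ennreal) {1<..}
      = hfun (enn2real s)"
    unfolding hfun_def
    by (subst emeasure_distr) (auto simp: pre emeasure_density)
  then show ?thesis unfolding gtail_def gamma_law_def by auto
qed

lemma gtail_meas[measurable]: "gtail \<in> borel_measurable borel"
  unfolding gtail_eq[abs_def] by measurable

lemma pos_nn:
  assumes f: "f \<in> borel_measurable lborel" and ab: "(a::real) < b" and pos: "\<And>x. a < x \<Longrightarrow> x < b \<Longrightarrow> 0 < f x"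
  shows "0 < integral\<^sup>N lborel f"
proof (rule ccontr)
  assume "\<not> 0 < integral\<^sup>N lborel f"
  then have "integral\<^sup>N lborel f = 0" by (simp add: not_less)
  then have "AE x in lborel. f x = 0" using nn_integral_0_iff_AE[OF f] by simp
  then have "AE x in lborel. x \<notin> {a<..<b}" by (rule AE_mp) (auto intro!: AE_I2 dest: pos)
  then have "emeasure lborel {a<..<b} = 0"
    by (subst (asm) AE_iff_measurable[of "{a<..<b}"]) auto
  with ab show False by simp
qed

lemma hfun_pos: "0 < a \<Longrightarrow> 0 < hfun a"
  unfolding hfun_def
  by (rule pos_nn[of _ 1 2]) (auto simp: gamma_pdf_def)

lemma gamma1_def': "gamma_law 1 = distr (density lborel (\<lambda>x. ennreal (gamma_pdf 1 x))) borel ennreal"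
  unfolding gamma_law_def by simp

lemma gamma1_prob: "prob_space (gamma_law 1)"
proof -
  have "density lborel (\<lambda>x. ennreal (gamma_pdf 1 x)) = density lborel (exponential_density 1)"
  proof (rule density_cong)
    show "AE x in lborel. ennreal (gamma_pdf 1 x) = ennreal (exponential_density 1 x)"
      using AE_lborel_singleton[of 0]
      by (rule AE_mp) (auto intro!: AE_I2 simp: gamma_pdf_def exponential_density_def)
  qed (auto simp: gamma_pdf_def exponential_density_def)
  then have "prob_space (density lborel (\<lambda>x. ennreal (gamma_pdf 1 x)))"
    using prob_space_exponential_density[of 1] by simp
  then show ?thesis unfolding gamma1_def' by (rule prob_space.prob_space_distr) simp
qed

lemma gamma1_sets: "sets (gamma_law 1) = sets borel"
  unfolding gamma1_def' by simp

lemma p0_pos: "0 < (\<integral>\<^sup>+s. gtail s \<partial>gamma_law 1)"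
proof -
  have "(\<integral>\<^sup>+s. gtail s \<partial>gamma_law 1) = (\<integral>\<^sup>+x. gtail (ennreal x) \<partial>density lborel (\<lambda>x. ennreal (gamma_pdf 1 x)))"
    unfolding gamma1_def' by (rule nn_integral_distr) auto
  also have "\<dots> = (\<integral>\<^sup>+x. ennreal (gamma_pdf 1 x) * gtail (ennreal x) \<partial>lborel)"
    by (rule nn_integral_density) auto
  also have "0 < \<dots>"
  proof (rule pos_nn[of _ 0 1])
    fix x :: real assume x: "0 < x" "x < 1"
    have "gtail (ennreal x) = hfun x" using x by (simp add: gtail_eq)
    then show "0 < ennreal (gamma_pdf 1 x) * gtail (ennreal x)"
      using x hfun_pos[of x] by (simp add: gamma_pdf_def ennreal_zero_less_mult_iff)
  qed auto
  finally show ?thesis .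
qed

lemma cube_disj: "m \<noteq> m' \<Longrightarrow> cube m \<inter> cube m' = ({} :: (real^'d::finite) set)"
proof (rule ccontr)
  assume "m \<noteq> m'" "cube m \<inter> cube m' \<noteq> ({} :: (real^'d::finite) set)"
  then obtain x :: "real^'d" where "x \<in> cube m" "x \<in> cube m'" by blast
  then have "2 * real m \<le> x$undefined" "x$undefined \<le> 2 * real m + 1"
    "2 * real m' \<le> x$undefined" "x$undefined \<le> 2 * real m' + 1"
    by (auto simp: cube_def mem_cbox_cst)
  then have "real m < real m' + 1" "real m' < real m + 1" by linarith+
  then have "m < m' + 1" "m' < m + 1" by (metis of_nat_1 of_nat_add of_nat_less_iff)+
  with \<open>m \<noteq> m'\<close> show False by simp
qed

lemma cube_sets[measurable]: "cube m \<in> sets borel"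
  unfolding cube_def by simp

context ccx begin

lemma ind_space_int: "(\<integral>\<^sup>+\<omega>. indicator (space M) \<omega> * c \<partial>M) = c"
  by (simp add: P.emeasure_space_1 mult.commute[of "indicator _ _"] nn_integral_cmult_indicator)

lemma L_prod_int:
  assumes I: "finite (I :: ('k \<times> nat) set)" and g[measurable]: "g \<in> borel_measurable borel"
  shows "(\<integral>\<^sup>+\<omega>. (\<Prod>a\<in>I. g (emeasure (L (fst a) \<omega>) (cube (snd a)))) \<partial>M) = (\<integral>\<^sup>+s. g s \<partial>gamma_law 1) ^ card I"
proof -
  define \<Phi> where "\<Phi> \<omega> = (\<lambda>a\<in>I. emeasure (L (fst a) \<omega>) (cube (snd a)))" for \<omega>
  have \<Phi>m: "\<Phi> \<in> measurable M (Pi\<^sub>M I (\<lambda>_. borel))"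
    unfolding \<Phi>_def by (rule measurable_restrict) simp
  interpret G: product_sigma_finite "\<lambda>_::('k \<times> nat). gamma_law 1"
    unfolding product_sigma_finite_def using gamma1_prob prob_space_imp_sigma_finite by blast
  have distr_eq: "distr M (Pi\<^sub>M I (\<lambda>_. borel)) \<Phi> = Pi\<^sub>M I (\<lambda>_. gamma_law 1)"
  proof (rule G.PiM_eqI[OF I])
    show "sets (distr M (Pi\<^sub>M I (\<lambda>_. borel)) \<Phi>) = sets (Pi\<^sub>M I (\<lambda>_. gamma_law 1))"
      by (simp add: gamma1_sets cong: sets_PiM_cong)
  next
    fix A assume A: "\<And>i. i \<in> I \<Longrightarrow> A i \<in> sets (gamma_law 1)"
    then have A': "\<And>i. i \<in> I \<Longrightarrow> A i \<in> sets borel" by (simp add: gamma1_sets)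
    have PA: "Pi\<^sub>E I A \<in> sets (Pi\<^sub>M I (\<lambda>_. borel))" using A' by (rule sets_PiM_I_finite[OF I])
    have "emeasure (distr M (Pi\<^sub>M I (\<lambda>_. borel)) \<Phi>) (Pi\<^sub>E I A) = emeasure M (\<Phi> -` Pi\<^sub>E I A \<inter> space M)"
      by (rule emeasure_distr[OF \<Phi>m PA])
    also have "\<Phi> -` Pi\<^sub>E I A \<inter> space M
       = space M \<inter> {\<omega>\<in>space M. \<forall>a\<in>I. emeasure (L (fst a) \<omega>) (cube (snd a)) \<in> A a}"
      by (auto simp: \<Phi>_def PiE_def Pi_def)
    also have "emeasure M \<dots> = (\<integral>\<^sup>+\<omega>. indicator (space M) \<omega> *
        (\<Prod>a\<in>I. emeasure (gamma_law (emeasure orthant_lebesgue (cube (snd a) :: (real^'d) set))) (A a)) \<partial>M)"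
    proof -
      have dj: "\<And>a b. a \<in> I \<Longrightarrow> b \<in> I \<Longrightarrow> a \<noteq> b \<Longrightarrow> fst a = fst b \<Longrightarrow> cube (snd a) \<inter> cube (snd b) = ({} :: (real^'d) set)"
      proof -
        fix a b :: "'k \<times> nat" assume "a \<in> I" "b \<in> I" "a \<noteq> b" "fst a = fst b"
        then have "snd a \<noteq> snd b" by (metis prod_eqI)
        then show "cube (snd a) \<inter> cube (snd b) = ({} :: (real^'d) set)" by (rule cube_disj)
      qed
      note cf = cil_finite[OF lawL, where E="space M" and I=I and B="\<lambda>a. cube (snd a)" and C=A and j=fst]
      have cf2: "emeasure M
      (space M \<inter> {\<omega> \<in> space M. \<forall>a\<in>I. emeasure (L (fst a) \<omega>) (cube (snd a)) \<in> A a}) =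
     (\<integral>\<^sup>+ \<omega>. indicator (space M) \<omega> *
           (\<Prod>a\<in>I. emeasure (gamma_law (emeasure orthant_lebesgue (cube (snd a) :: (real^'d) set))) (A a)) \<partial>M)"
        by (rule cf) (use I A' dj in auto)
      then show ?thesis by simp
    qed
    also have "(\<integral>\<^sup>+\<omega>. indicator (space M) \<omega> *
        (\<Prod>a\<in>I. emeasure (gamma_law (emeasure orthant_lebesgue (cube (snd a) :: (real^'d) set))) (A a)) \<partial>M) = (\<Prod>a\<in>I. emeasure (gamma_law 1) (A a))"
      by (simp add: olb_cube ind_space_int)
    finally show "emeasure (distr M (Pi\<^sub>M I (\<lambda>_. borel)) \<Phi>) (Pi\<^sub>E I A) = (\<Prod>a\<in>I. emeasure (gamma_law 1) (A a))" .
  qed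
  have "(\<integral>\<^sup>+\<omega>. (\<Prod>a\<in>I. g (emeasure (L (fst a) \<omega>) (cube (snd a)))) \<partial>M) = (\<integral>\<^sup>+\<omega>. (\<Prod>a\<in>I. g (\<Phi> \<omega> a)) \<partial>M)"
    by (rule nn_integral_cong) (auto simp: \<Phi>_def intro!: prod.cong)
  also have "\<dots> = (\<integral>\<^sup>+x. (\<Prod>a\<in>I. g (x a)) \<partial>distr M (Pi\<^sub>M I (\<lambda>_. borel)) \<Phi>)"
    by (rule nn_integral_distr[symmetric, OF \<Phi>m]) (use I in simp)
  also have "\<dots> = (\<integral>\<^sup>+x. (\<Prod>a\<in>I. g (x a)) \<partial>Pi\<^sub>M I (\<lambda>_. gamma_law 1))"
    by (simp add: distr_eq)
  also have "\<dots> = (\<Prod>a\<in>I. (\<integral>\<^sup>+s. g s \<partial>gamma_law 1))"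
    by (rule G.product_nn_integral_prod[OF I]) (simp add: gamma1_sets cong: measurable_cong_sets)
  also have "\<dots> = (\<integral>\<^sup>+s. g s \<partial>gamma_law 1) ^ card I" by simp
  finally show ?thesis .
qed

end

context ccx begin

definition r0 :: 'r where "r0 = undefined"

definition GU :: "nat set \<Rightarrow> 'w set" where
  "GU U = {\<omega>\<in>space M. \<forall>a\<in>(UNIV::'k set) \<times> U. emeasure (W (fst a) r0 \<omega>) (cube (snd a)) \<in> {1<..}}"

definition p0 :: ennreal where "p0 = (\<integral>\<^sup>+s. gtail s \<partial>gamma_law 1)"

lemma GU_sets: "GU U \<in> sets M"
proof -
  have "GU U = (\<Inter>a\<in>(UNIV::'k set) \<times> U. {\<omega>\<in>space M. emeasure (W (fst a) r0 \<omega>) (cube (snd a)) \<in> {1<..}}) \<inter> space M"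
    by (auto simp: GU_def)
  also have "\<dots> \<in> sets M"
  proof (cases "U = {}")
    case True then show ?thesis by simp
  next
    case False
    have c: "countable ((UNIV::'k set) \<times> U)" by (rule countable_SIGMA) auto
    show ?thesis
      by (intro sets.Int sets.countable_INT'[OF c]) (use False in \<open>auto\<close>)
  qed
  finally show ?thesis .
qed

lemma W_rect: assumes U: "finite U" shows "emeasure M (GU U) = p0 ^ (CARD('k) * card U)"
proof -
  let ?I = "(UNIV::'k set) \<times> U"
  have I: "finite ?I" using U by simp
  have dj: "\<And>a b. a \<in> ?I \<Longrightarrow> b \<in> ?I \<Longrightarrow> a \<noteq> b \<Longrightarrow> (fst a, r0) = (fst b, r0) \<Longrightarrow> cube (snd a) \<inter> cube (snd b) = ({} :: (real^'d) set)"
  proof -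
    fix a b :: "'k \<times> nat" assume "a \<noteq> b" "(fst a, r0) = (fst b, (r0::'r))"
    then have "snd a \<noteq> snd b" by (metis prod_eqI prod.inject)
    then show "cube (snd a) \<inter> cube (snd b) = ({} :: (real^'d) set)" by (rule cube_disj)
  qed
  note cf = cil_finite[OF lawW, where E="space M" and I="?I" and B="\<lambda>a. cube (snd a) :: (real^'d) set" and C="\<lambda>_. {1<..}" and j="\<lambda>a. (fst a, r0)"]
  have "emeasure M (space M \<inter> {\<omega>\<in>space M. \<forall>a\<in>?I. emeasure (W (fst a) r0 \<omega>) (cube (snd a)) \<in> {1<..}})
     = (\<integral>\<^sup>+\<omega>. indicator (space M) \<omega> * (\<Prod>a\<in>?I. emeasure (gamma_law (emeasure (L (fst a) \<omega>) (cube (snd a)))) {1<..}) \<partial>M)"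
    by (rule cf[unfolded prod.case]) (use I dj spW in auto)
  also have "\<dots> = (\<integral>\<^sup>+\<omega>. (\<Prod>a\<in>?I. gtail (emeasure (L (fst a) \<omega>) (cube (snd a)))) \<partial>M)"
    by (rule nn_integral_cong) (simp add: gtail_def)
  also have "\<dots> = p0 ^ card ?I"
    unfolding p0_def by (rule L_prod_int[OF I gtail_meas])
  finally show ?thesis using U by (simp add: GU_def card_cartesian_product Int_absorb1)
qed

end

lemma enn2real_pow: "enn2real (a ^ n) = enn2real a ^ n"
  by (induction n) (simp_all add: enn2real_mult)

context ccx begin

lemma p0_fin: "p0 \<noteq> \<top>"
proof
  assume "p0 = \<top>"
  then have "emeasure M (GU {0}) = \<top>" using W_rect[of "{0}"] by (simp add: power_eq_top_ennreal)
  moreover have "emeasure M (GU {0}) \<le> 1"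
    using P.emeasure_space_1 GU_sets[of "{0}"] emeasure_space[of M "GU {0}"] by simp
  ultimately show False by simp
qed

definition pr :: real where "pr = enn2real p0 ^ CARD('k)"

lemma GU_measure: "finite U \<Longrightarrow> measure M (GU U) = pr ^ card U"
  unfolding measure_def using W_rect[of U]
  by (simp add: pr_def enn2real_pow power_mult)

lemma pr_pos: "0 < pr"
proof -
  have "0 < enn2real p0" using p0_fin p0_pos unfolding p0_def
    by (simp add: enn2real_positive_iff less_top)
  then show ?thesis by (simp add: pr_def)
qed

lemma pr_le1: "pr \<le> 1"
  using GU_measure[of "{0}"] P.prob_le_1[of "GU {0}"] by simp

lemma GU_single_ind: "finite U \<Longrightarrow> \<omega> \<in> space M \<Longrightarrow> (\<Prod>m\<in>U. indicator (GU {m}) \<omega> :: real) = indicator (GU U) \<omega>"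
proof -
  assume U: "finite U" and \<omega>: "\<omega> \<in> space M"
  have "\<omega> \<in> GU U \<longleftrightarrow> (\<forall>m\<in>U. \<omega> \<in> GU {m})" using \<omega> by (auto simp: GU_def)
  then show ?thesis using U by (simp add: indicator_def prod_zero_iff)
qed

lemma GU_fin_meas: "emeasure M (GU U) < \<infinity>"
  using P.emeasure_space_1 GU_sets[of U] emeasure_space[of M "GU U"] by (simp add: le_less_trans)

lemma expand:
  assumes S: "finite S"
  shows "(\<integral>\<omega>. (\<Prod>m\<in>S. 1 - c * indicator (GU {m}) \<omega>) \<partial>M) = (1 - c * pr) ^ card S"
proof -
  have pw: "(\<Prod>m\<in>S. 1 - c * indicator (GU {m}) \<omega>) = (\<Sum>U\<in>Pow S. (-c)^card U * indicator (GU U) \<omega>)"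
    if \<omega>: "\<omega> \<in> space M" for \<omega>
  proof -
    have "(\<Prod>m\<in>S. 1 - c * indicator (GU {m}) \<omega>) = (\<Prod>m\<in>S. (-c * indicator (GU {m}) \<omega>) + 1)"
      by simp
    also have "\<dots> = (\<Sum>U\<in>Pow S. (\<Prod>m\<in>U. -c * indicator (GU {m}) \<omega>) * (\<Prod>m\<in>S-U. 1))"
      by (rule prod_add[OF S])
    also have "\<dots> = (\<Sum>U\<in>Pow S. (-c)^card U * indicator (GU U) \<omega>)"
    proof (rule sum.cong[OF refl])
      fix U assume "U \<in> Pow S"
      then have U: "finite U" using S finite_subset by auto
      show "(\<Prod>m\<in>U. -c * indicator (GU {m}) \<omega>) * (\<Prod>m\<in>S-U. 1) = (-c)^card U * indicator (GU U) \<omega>"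
        using GU_single_ind[OF U \<omega>] by (subst prod.distrib) simp
    qed
    finally show ?thesis .
  qed
  have "(\<integral>\<omega>. (\<Prod>m\<in>S. 1 - c * indicator (GU {m}) \<omega>) \<partial>M)
      = (\<integral>\<omega>. (\<Sum>U\<in>Pow S. (-c)^card U * indicator (GU U) \<omega>) \<partial>M)"
    by (rule Bochner_Integration.integral_cong[OF refl]) (rule pw)
  also have "\<dots> = (\<Sum>U\<in>Pow S. (\<integral>\<omega>. (-c)^card U * indicator (GU U) \<omega> \<partial>M))"
    by (rule Bochner_Integration.integral_sum) (auto intro!: integrable_mult_right GU_sets GU_fin_meas)
  also have "\<dots> = (\<Sum>U\<in>Pow S. (\<Prod>m\<in>U. - c * pr) * (\<Prod>m\<in>S-U. 1))"
  proof (rule sum.cong[OF refl])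
    fix U assume "U \<in> Pow S"
    then have U: "finite U" using S finite_subset by auto
    have "GU U \<inter> space M = GU U" using GU_sets[of U] sets.sets_into_space by blast
    then show "(\<integral>\<omega>. (-c)^card U * indicator (GU U) \<omega> \<partial>M) = (\<Prod>m\<in>U. - c * pr) * (\<Prod>m\<in>S-U. 1)"
      using GU_measure[OF U] by (simp add: power_mult_distrib[symmetric])
  qed
  also have "\<dots> = (\<Prod>m\<in>S. - c * pr + 1)"
    by (rule prod_add[OF S, symmetric])
  also have "\<dots> = (1 - c * pr) ^ card S" by simp
  finally show ?thesis .
qed

end

definition Dm :: "nat \<Rightarrow> ('k::finite \<Rightarrow> real^'d::finite) set" where
  "Dm m = Pi\<^sub>E UNIV (\<lambda>_. cube m)"

lemma Dm_sets: "Dm m \<in> sets (tuple_space :: (('k::finite \<Rightarrow> real^'d::finite) measure))"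
  unfolding Dm_def by (rule PiE_sets) simp

lemma Dm_disj: "m \<noteq> m' \<Longrightarrow> Dm m \<inter> Dm m' = ({} :: ('k::finite \<Rightarrow> real^'d::finite) set)"
proof (rule ccontr)
  assume "m \<noteq> m'" "Dm m \<inter> Dm m' \<noteq> ({} :: ('k::finite \<Rightarrow> real^'d::finite) set)"
  then obtain x :: "'k \<Rightarrow> real^'d" where "x \<in> Dm m" "x \<in> Dm m'" by blast
  then have "x undefined \<in> cube m \<inter> cube m'" by (auto simp: Dm_def)
  with cube_disj[OF \<open>m \<noteq> m'\<close>] show False by blast
qed

definition cc :: real where "cc = 1 - exp (-1)"

lemma cc_bounds: "0 < cc" "cc < 1"
  unfolding cc_def by auto

context ccx begin

lemma factor_bound:
  assumes \<omega>: "\<omega> \<in> space M" and sf: "\<forall>k r. sigma_finite_measure (W k r \<omega>)"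
  shows "emeasure (poisson_law (T_mean (\<lambda>k r. W k r \<omega>) (Dm m))) {0} \<le> ennreal (1 - cc * indicator (GU {m}) \<omega>)"
proof -
  define t where "t = T_mean (\<lambda>k r. W k r \<omega>) (Dm m)"
  have le1: "emeasure (poisson_law t) {0} \<le> 1"
    by (simp add: poisson_zero)
  show ?thesis
  proof (cases "\<omega> \<in> GU {m}")
    case False then show ?thesis using le1 by (simp add: t_def)
  next
    case True
    then have W1: "\<And>k. 1 < emeasure (W k r0 \<omega>) (cube m)" by (auto simp: GU_def)
    have "t = (\<Sum>r\<in>UNIV. \<Prod>k\<in>UNIV. emeasure (W k r \<omega>) (cube m))"
      unfolding t_def Dm_def by (rule T_mean_prod[OF \<omega> sf]) simp
    also have "\<dots> \<ge> (\<Prod>k\<in>UNIV. emeasure (W k r0 \<omega>) (cube m))"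
      by (rule member_le_sum) auto
    finally have "(\<Prod>k\<in>UNIV. emeasure (W k r0 \<omega>) (cube m)) \<le> t" .
    moreover have "(\<Prod>k\<in>(UNIV::'k set). (1::ennreal)) \<le> (\<Prod>k\<in>UNIV. emeasure (W k r0 \<omega>) (cube m))"
      by (rule prod_mono_ennreal) (use W1 in \<open>auto intro: less_imp_le\<close>)
    ultimately have t1: "1 \<le> t" by simp
    have "emeasure (poisson_law t) {0} \<le> ennreal (exp (-1))"
    proof (cases "t = \<top>")
      case False
      then have "1 \<le> enn2real t" using t1 enn2real_mono[of 1 t] by (simp add: less_top)
      then show ?thesis using False by (simp add: poisson_zero)
    qed (simp add: poisson_zero)
    then show ?thesis using True by (simp add: t_def cc_def)
  qed
qed

lemma Z_bound:
  assumes S: "finite S"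
  shows "emeasure M {\<omega>\<in>space M. \<forall>m\<in>S. emeasure (T \<omega>) (Dm m) \<in> {0}} \<le> ennreal ((1 - cc * pr) ^ card S)"
proof -
  define f where "f \<omega> = (\<Prod>m\<in>S. 1 - cc * indicator (GU {m}) \<omega>)" for \<omega>
  have fac01: "0 \<le> 1 - cc * indicator (GU {m}) \<omega> \<and> 1 - cc * indicator (GU {m}) \<omega> \<le> (1::real)" for m \<omega>
    using cc_bounds by (auto simp: indicator_def)
  have f_nn: "0 \<le> f \<omega>" for \<omega> unfolding f_def using fac01 by (intro prod_nonneg) auto
  have f_le: "f \<omega> \<le> 1" for \<omega> unfolding f_def using fac01 by (intro prod_le_1) auto
  have f_meas: "f \<in> borel_measurable M" unfolding f_def
    using GU_sets by (intro borel_measurable_prod) (auto intro!: borel_measurable_indicator)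
  have f_int: "integrable M f"
    by (rule P.integrable_const_bound[where B=1]) (use f_nn f_le f_meas in auto)
  have dj: "\<And>a b. a \<in> S \<Longrightarrow> b \<in> S \<Longrightarrow> a \<noteq> b \<Longrightarrow> (\<lambda>_. ()) a = (\<lambda>_. ()) b \<Longrightarrow> Dm a \<inter> Dm b = ({} :: ('k \<Rightarrow> real^'d) set)"
    by (rule Dm_disj) simp
  note cf = cil_finite[OF lawT, where E="space M" and I=S and B="Dm :: nat \<Rightarrow> ('k \<Rightarrow> real^'d) set" and C="\<lambda>_. {0}" and j="\<lambda>_. ()"]
  have "emeasure M (space M \<inter> {\<omega>\<in>space M. \<forall>m\<in>S. emeasure (T \<omega>) (Dm m) \<in> {0}})
     = (\<integral>\<^sup>+\<omega>. indicator (space M) \<omega> * (\<Prod>m\<in>S. emeasure (poisson_law (T_mean (\<lambda>k r. W k r \<omega>) (Dm m))) {0}) \<partial>M)"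
    by (rule cf) (use S dj spT Dm_sets in auto)
  also have "\<dots> \<le> (\<integral>\<^sup>+\<omega>. ennreal (f \<omega>) \<partial>M)"
  proof (rule nn_integral_mono_AE)
    show "AE \<omega> in M. indicator (space M) \<omega> * (\<Prod>m\<in>S. emeasure (poisson_law (T_mean (\<lambda>k r. W k r \<omega>) (Dm m))) {0}) \<le> ennreal (f \<omega>)"
      using W_sf
    proof (rule AE_mp, intro AE_I2 impI)
      fix \<omega> assume \<omega>: "\<omega> \<in> space M" and sf: "\<forall>k r. sigma_finite_measure (W k r \<omega>)"
      have "(\<Prod>m\<in>S. emeasure (poisson_law (T_mean (\<lambda>k r. W k r \<omega>) (Dm m))) {0}) \<le> (\<Prod>m\<in>S. ennreal (1 - cc * indicator (GU {m}) \<omega>))"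
        by (rule prod_mono_ennreal) (rule factor_bound[OF \<omega> sf])
      also have "\<dots> = ennreal (f \<omega>)" unfolding f_def using fac01 by (intro prod_ennreal) auto
      finally show "indicator (space M) \<omega> * (\<Prod>m\<in>S. emeasure (poisson_law (T_mean (\<lambda>k r. W k r \<omega>) (Dm m))) {0}) \<le> ennreal (f \<omega>)"
        using \<omega> by simp
    qed
  qed
  also have "\<dots> = ennreal (\<integral>\<omega>. f \<omega> \<partial>M)"
    by (rule nn_integral_eq_integral[OF f_int]) (use f_nn in auto)
  also have "(\<integral>\<omega>. f \<omega> \<partial>M) = (1 - cc * pr) ^ card S"
    unfolding f_def by (rule expand[OF S])
  finally show ?thesis by (simp add: Int_absorb1 cong: rev_conj_cong)
qed

end

lemma box_cbox: "box \<alpha> = Pi\<^sub>E UNIV (\<lambda>_. cbox (cst 0) (cst \<alpha>) :: (real^'d::finite) set)"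
  by (auto simp: box_def PiE_UNIV_domain mem_cbox_cst Pi_iff)

lemma points_mono: "\<alpha> \<le> \<beta> \<Longrightarrow> points_T \<alpha> \<nu> \<subseteq> points_T \<beta> \<nu>"
proof
  fix x assume ab: "\<alpha> \<le> \<beta>" and x: "x \<in> points_T \<alpha> \<nu>"
  then have "\<forall>k i. 0 \<le> x k $ i \<and> x k $ i \<le> \<beta>" by (auto simp: points_T_def box_def intro: order.trans)
  then show "x \<in> points_T \<beta> \<nu>" using x by (simp add: points_T_def box_def)
qed

lemma Dm_box: "x \<in> Dm m \<Longrightarrow> x \<in> box (2 * real m + 1)"
proof -
  assume "x \<in> Dm m"
  then have h: "\<And>k i. 2 * real m \<le> x k $ i \<and> x k $ i \<le> 2 * real m + 1"
    by (auto simp: Dm_def cube_def mem_cbox_cst PiE_UNIV_domain Pi_iff)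
  have "\<And>k i. 0 \<le> x k $ i \<and> x k $ i \<le> 2 * real m + 1"
  proof -
    fix k i from h[of k i] show "0 \<le> x k $ i \<and> x k $ i \<le> 2 * real m + 1"
      by (smt (verit) of_nat_0_le_iff)
  qed
  then show ?thesis by (simp add: box_def)
qed

lemma final_det:
  fixes \<nu> :: "('k::finite \<Rightarrow> real^'d::finite) measure"
  assumes S: "sets \<nu> = sets tuple_space"
    and fin: "\<And>n::nat. finite (points_T (real n) \<nu>)"
    and D: "\<And>m. intg \<nu> (Dm m) \<and> emeasure \<nu> (Dm m) \<noteq> \<top>"
    and io: "\<And>N. \<exists>m\<ge>N. emeasure \<nu> (Dm m) \<noteq> 0"
  shows "filterlim (\<lambda>\<alpha>. card (points_T \<alpha> \<nu>)) at_top at_top"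
proof -
  have fina: "finite (points_T \<alpha> \<nu>)" for \<alpha>
    using fin[of "nat \<lceil>\<alpha>\<rceil>"] points_mono[of \<alpha> "real (nat \<lceil>\<alpha>\<rceil>)" \<nu>]
    by (meson finite_subset of_nat_ceiling)
  define Ms where "Ms = {m. emeasure \<nu> (Dm m) \<noteq> 0}"
  have infM: "infinite Ms" unfolding Ms_def infinite_nat_iff_unbounded_le using io by blast
  define a where "a m = (SOME x. x \<in> Dm m \<and> 0 < emeasure \<nu> {x})" for m
  have a: "a m \<in> Dm m \<and> 0 < emeasure \<nu> {a m}" if "m \<in> Ms" for m
  proof -
    have "\<exists>x\<in>Dm m. 0 < emeasure \<nu> {x}"
      using atom_exists[OF S Dm_sets] D that by (auto simp: Ms_def)
    then show ?thesis unfolding a_def by (metis (mono_tags, lifting) someI_ex)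
  qed
  have inj: "inj_on a Ms"
  proof
    fix m m' assume "m \<in> Ms" "m' \<in> Ms" "a m = a m'"
    moreover have "a m \<in> Dm m" "a m' \<in> Dm m'" using a \<open>m \<in> Ms\<close> \<open>m' \<in> Ms\<close> by auto
    ultimately have "a m \<in> Dm m \<inter> Dm m'" by simp
    then show "m = m'" using Dm_disj[of m m'] by (metis empty_iff)
  qed
  show ?thesis unfolding filterlim_at_top
  proof
    fix Z :: nat
    obtain F where F: "finite F" "card F = Z" "F \<subseteq> Ms"
      using infinite_arbitrarily_large[OF infM] by blast
    define \<beta> where "\<beta> = 2 * real (Max (insert 0 F)) + 1"
    show "eventually (\<lambda>\<alpha>. Z \<le> card (points_T \<alpha> \<nu>)) at_top"
      unfolding eventually_at_top_linorder
    proof (intro exI allI impI)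
      fix \<alpha> assume "\<beta> \<le> \<alpha>"
      have sub: "a ` F \<subseteq> points_T \<alpha> \<nu>"
      proof
        fix x assume "x \<in> a ` F"
        then obtain m where m: "m \<in> F" "x = a m" by blast
        then have "x \<in> Dm m" "0 < emeasure \<nu> {x}" using a F(3) by auto
        then have "x \<in> points_T (2 * real m + 1) \<nu>" using Dm_box by (auto simp: points_T_def)
        moreover have "2 * real m + 1 \<le> \<alpha>"
          using \<open>\<beta> \<le> \<alpha>\<close> m F(1) unfolding \<beta>_def by (smt (verit) Max_ge finite_insert insertCI of_nat_mono)
        ultimately show "x \<in> points_T \<alpha> \<nu>" using points_mono by blast
      qed
      have "card (a ` F) = Z" using F inj by (metis card_image inj_on_subset)
      then show "Z \<le> card (points_T \<alpha> \<nu>)" using card_mono[OF fina sub] by simp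
    qed
  qed
qed

context ccx begin

lemma q_bounds: "0 \<le> 1 - cc * pr" "1 - cc * pr < 1"
proof -
  have "cc * pr \<le> 1 * 1" using cc_bounds pr_le1 pr_pos by (intro mult_mono) auto
  then show "0 \<le> 1 - cc * pr" by simp
  show "1 - cc * pr < 1" using cc_bounds pr_pos by simp
qed

lemma io: "AE \<omega> in M. \<forall>N. \<exists>m\<ge>N. emeasure (T \<omega>) (Dm m) \<noteq> 0"
proof (subst AE_all_countable, rule allI)
  fix N :: nat
  define Z where "Z = {\<omega>\<in>space M. \<forall>m. N \<le> m \<longrightarrow> emeasure (T \<omega>) (Dm m) = 0}"
  have Zs: "Z \<in> sets M"
  proof -
    have "\<And>m. {\<omega>\<in>space M. N \<le> m \<longrightarrow> emeasure (T \<omega>) (Dm m) = 0} \<in> sets M"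
      using T_meas[OF Dm_sets] by measurable
    then show ?thesis unfolding Z_def by (rule sets.sets_Collect_countable_All)
  qed
  let ?q = "1 - cc * pr"
  have bnd: "emeasure M Z \<le> ennreal (?q ^ n)" for n
  proof -
    have "Z \<subseteq> {\<omega>\<in>space M. \<forall>m\<in>{N..<N+n}. emeasure (T \<omega>) (Dm m) \<in> {0}}"
      by (auto simp: Z_def)
    then have "emeasure M Z \<le> emeasure M {\<omega>\<in>space M. \<forall>m\<in>{N..<N+n}. emeasure (T \<omega>) (Dm m) \<in> {0}}"
      by (intro emeasure_mono) (use T_meas[OF Dm_sets] in measurable)
    also have "\<dots> \<le> ennreal (?q ^ card {N..<N+n})" by (rule Z_bound) simp
    finally show ?thesis by simp
  qed
  have lim: "(\<lambda>n. ennreal (?q ^ n)) \<longlonglongrightarrow> ennreal 0"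
    by (rule tendsto_ennrealI, rule LIMSEQ_power_zero) (use q_bounds in simp)
  have "emeasure M Z \<le> ennreal 0"
    by (rule LIMSEQ_le_const[OF lim]) (use bnd in auto)
  then have Z0: "emeasure M Z = 0" by simp
  show "AE \<omega> in M. \<exists>m\<ge>N. emeasure (T \<omega>) (Dm m) \<noteq> 0"
  proof -
    have "{\<omega>\<in>space M. \<not> (\<exists>m\<ge>N. emeasure (T \<omega>) (Dm m) \<noteq> 0)} = Z" by (auto simp: Z_def)
    from AE_iff_measurable[OF Zs this] Z0 show ?thesis by simp
  qed
qed

lemma T_mean_fin_cbox: "AE \<omega> in M. T_mean (\<lambda>k r. W k r \<omega>) (Pi\<^sub>E UNIV (\<lambda>_. cbox a b)) \<noteq> \<top>"
proof -
  have "AE \<omega> in M. \<forall>k\<in>UNIV. \<forall>r\<in>UNIV. emeasure (W k r \<omega>) (cbox a b) \<noteq> \<top>"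
    by (intro AE_finite_allI) (auto intro: W_fin_cbox)
  with W_sf AE_space show ?thesis
  proof (eventually_elim)
    case (elim \<omega>)
    then have "T_mean (\<lambda>k r. W k r \<omega>) (Pi\<^sub>E UNIV (\<lambda>_. cbox a b)) = (\<Sum>r\<in>UNIV. \<Prod>k\<in>UNIV. emeasure (W k r \<omega>) (cbox a b))"
      by (intro T_mean_prod) auto
    then show ?case using elim by (simp add: ennreal_prod_eq_top)
  qed
qed

lemma T_fin_cbox: "AE \<omega> in M. emeasure (T \<omega>) (Pi\<^sub>E UNIV (\<lambda>_. cbox a b)) \<noteq> \<top>"
  by (rule T_fin[OF PiE_sets T_mean_fin_cbox]) simp

lemma intg_AE:
  assumes A: "A \<in> sets tuple_space" and fin: "AE \<omega> in M. emeasure (T \<omega>) A \<noteq> \<top>"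
  shows "AE \<omega> in M. intg (T \<omega>) A"
proof -
  have "AE \<omega> in M. \<forall>j z. emeasure (T \<omega>) (A \<inter> Q j z) \<in> range of_nat \<union> {\<top>}"
    by (simp only: AE_all_countable) (intro allI T_nat sets.Int[OF A Q_sets])
  with fin AE_space show ?thesis
  proof (eventually_elim)
    case (elim \<omega>)
    have "emeasure (T \<omega>) (A \<inter> Q j z) \<in> range of_nat" for j z
    proof -
      have "emeasure (T \<omega>) (A \<inter> Q j z) \<le> emeasure (T \<omega>) A"
        using elim T_sets[of \<omega>] A by (intro emeasure_mono) auto
      then have "emeasure (T \<omega>) (A \<inter> Q j z) \<noteq> \<top>" using elim by (auto simp: top_unique)
      then show ?thesis using elim by auto
    qed
    then show ?case by (simp add: intg_def)
  qed
qed

lemma fin_all: "AE \<omega> in M. finite (points_T \<alpha> (T \<omega>))"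
proof -
  have f: "AE \<omega> in M. emeasure (T \<omega>) (box \<alpha>) \<noteq> \<top>"
    unfolding box_cbox by (rule T_fin_cbox)
  from intg_AE[OF box_sets f] f AE_space show ?thesis
  proof (eventually_elim)
    case (elim \<omega>) then show ?case using fin_points[OF T_sets] by blast
  qed
qed

lemma part2: "AE \<omega> in M. filterlim (\<lambda>\<alpha>. card (points_T \<alpha> (T \<omega>))) at_top at_top"
proof -
  have a1: "AE \<omega> in M. \<forall>n::nat. finite (points_T (real n) (T \<omega>))"
    by (simp only: AE_all_countable) (intro allI fin_all)
  have Dfin: "AE \<omega> in M. emeasure (T \<omega>) (Dm m) \<noteq> \<top>" for m
    unfolding Dm_def cube_def by (rule T_fin_cbox)
  have a2: "AE \<omega> in M. \<forall>m. intg (T \<omega>) (Dm m) \<and> emeasure (T \<omega>) (Dm m) \<noteq> \<top>"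
    by (simp only: AE_all_countable AE_conj_iff) (intro allI conjI intg_AE[OF Dm_sets] Dfin)
  from a1 a2 io AE_space show ?thesis
  proof (eventually_elim)
    case (elim \<omega>) then show ?case by (intro final_det[OF T_sets]) auto
  qed
qed

end

theorem lemma3p1:
  fixes M :: "'w measure"
    and L :: "'k::finite \<Rightarrow> 'w \<Rightarrow> (real^'d::finite) measure"
    and W :: "'k \<Rightarrow> 'r::finite \<Rightarrow> 'w \<Rightarrow> (real^'d) measure"
    and T :: "'w \<Rightarrow> ('k \<Rightarrow> real^'d) measure"
  assumes "coupled_construction M L W T"
  shows "(\<forall>\<alpha>>0. AE \<omega> in M. finite (points_T \<alpha> (T \<omega>))) \<and>
         (AE \<omega> in M. filterlim (\<lambda>\<alpha>. card (points_T \<alpha> (T \<omega>))) at_top at_top)"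
proof -
  interpret ccx M L W T by (rule ccx.intro) (rule assms)
  show ?thesis using fin_all part2 by blast
qed

end
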